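(* Let $G$ be any graph without isolated vertices. If $f=(V_0,V_1,V_2)$ is a $\gamma_{qtR}(G)$-function and $V_{1,2}^*=\{v\in V_1: N(v)\cap V_2\neq\emptyset\}$, then $$\gamma(G)+|V_2|+|V_{1,2}^*|\le \gamma_{qtR}(G)\le 3\gamma(G).$$
   Context: All graphs are finite, simple and undirected; $N(v)$ is the open neighborhood of $v$ and $\gamma(G)$ the domination number. For $f:V(G)\to\{0,1,2\}$ write $V_i=\{v:f(v)=i\}$ and $f=(V_0,V_1,V_2)$; weight $\omega(f)=|V_1|+2|V_2|$. A quasi-total Roman dominating function (QTRDF) is an $f$ such that every vertex labeled $0$ is adjacent to a vertex labeled $2$, and every vertex isolated in the subgraph induced by $V_1\cup V_2$ has label $1$; $\gamma_{qtR}(G)$ is the minimum weight of a QTRDF, and a $\gamma_{qtR}(G)$-function is a QTRDF of weight $\gamma_{qtR}(G)$. *)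

theory Defs
  imports Main
begin

definition simple_graph :: "'a set \<Rightarrow> ('a \<Rightarrow> 'a \<Rightarrow> bool) \<Rightarrow> bool" where
  "simple_graph V E \<longleftrightarrow> finite V \<and> (\<forall>u v. E u v \<longrightarrow> u \<in> V \<and> v \<in> V)
     \<and> (\<forall>u v. E u v \<longrightarrow> E v u) \<and> (\<forall>v. \<not> E v v)"

definition nbhd :: "'a set \<Rightarrow> ('a \<Rightarrow> 'a \<Rightarrow> bool) \<Rightarrow> 'a \<Rightarrow> 'a set" where
  "nbhd V E v = {u \<in> V. E v u}"

definition no_isolated :: "'a set \<Rightarrow> ('a \<Rightarrow> 'a \<Rightarrow> bool) \<Rightarrow> bool" where
  "no_isolated V E \<longleftrightarrow> (\<forall>v\<in>V. nbhd V E v \<noteq> {})"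

definition dominating_set :: "'a set \<Rightarrow> ('a \<Rightarrow> 'a \<Rightarrow> bool) \<Rightarrow> 'a set \<Rightarrow> bool" where
  "dominating_set V E D \<longleftrightarrow> D \<subseteq> V \<and> (\<forall>v\<in>V - D. nbhd V E v \<inter> D \<noteq> {})"

definition domination_number :: "'a set \<Rightarrow> ('a \<Rightarrow> 'a \<Rightarrow> bool) \<Rightarrow> nat" where
  "domination_number V E = Min (card ` {D. dominating_set V E D})"

text \<open>Labellings f : V -> {0,1,2}; values outside V are irrelevant and fixed to 0.\<close>
definition qtrdf :: "'a set \<Rightarrow> ('a \<Rightarrow> 'a \<Rightarrow> bool) \<Rightarrow> ('a \<Rightarrow> nat) \<Rightarrow> bool" where
  "qtrdf V E f \<longleftrightarrow>
     (\<forall>v. v \<notin> V \<longrightarrow> f v = 0) \<and>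
     (\<forall>v\<in>V. f v \<le> 2) \<and>
     (\<forall>v\<in>V. f v = 0 \<longrightarrow> (\<exists>u\<in>nbhd V E v. f u = 2)) \<and>
     (\<forall>v\<in>V. f v \<noteq> 0 \<and> (\<forall>u\<in>nbhd V E v. f u = 0) \<longrightarrow> f v = 1)"

definition weight :: "'a set \<Rightarrow> ('a \<Rightarrow> nat) \<Rightarrow> nat" where
  "weight V f = (\<Sum>v\<in>V. f v)"

definition qtR_number :: "'a set \<Rightarrow> ('a \<Rightarrow> 'a \<Rightarrow> bool) \<Rightarrow> nat" where
  "qtR_number V E = Min (weight V ` {f. qtrdf V E f})"

definition qtR_function :: "'a set \<Rightarrow> ('a \<Rightarrow> 'a \<Rightarrow> bool) \<Rightarrow> ('a \<Rightarrow> nat) \<Rightarrow> bool" where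
  "qtR_function V E f \<longleftrightarrow> qtrdf V E f \<and> weight V f = qtR_number V E"

end

theory Submission
  imports Defs
begin

lemma qtR_le:
  assumes "finite V" "qtrdf V E g"
  shows "qtR_number V E \<le> weight V g"
proof -
  have "weight V ` {f. qtrdf V E f} \<subseteq> {0..2 * card V}"
  proof
    fix x assume "x \<in> weight V ` {f. qtrdf V E f}"
    then obtain h where h: "qtrdf V E h" "x = weight V h" by auto
    have "weight V h \<le> (\<Sum>v\<in>V. 2)" unfolding weight_def
      using h(1) by (intro sum_mono) (auto simp: qtrdf_def)
    then show "x \<in> {0..2 * card V}" using h by simp
  qed
  then have "finite (weight V ` {f. qtrdf V E f})" using finite_subset by blast
  then show ?thesis unfolding qtR_number_def using assms(2) by (intro Min_le) auto
qed

lemma dom_fin: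
  assumes "finite V"
  shows "finite (card ` {D. dominating_set V E D})"
proof -
  have "card ` {D. dominating_set V E D} \<subseteq> {0..card V}"
    using assms by (auto simp: dominating_set_def intro: card_mono)
  then show ?thesis using finite_subset by blast
qed

lemma dom_le:
  assumes "finite V" "dominating_set V E D"
  shows "domination_number V E \<le> card D"
  unfolding domination_number_def using assms dom_fin[OF assms(1)] by (intro Min_le) auto

lemma dom_ex:
  assumes "finite V"
  shows "\<exists>D. dominating_set V E D \<and> card D = domination_number V E"
proof -
  have "dominating_set V E V" by (auto simp: dominating_set_def)
  then have "domination_number V E \<in> card ` {D. dominating_set V E D}"
    unfolding domination_number_def using dom_fin[OF assms] by (intro Min_in) auto
  then show ?thesis by auto
qed

theorem mainTheorem3:
  fixes V :: "'a set" and E :: "'a \<Rightarrow> 'a \<Rightarrow> bool" and f :: "'a \<Rightarrow> nat"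
  assumes "simple_graph V E"
    and "no_isolated V E"
    and "qtR_function V E f"
  shows "domination_number V E + card {v\<in>V. f v = 2}
           + card {v\<in>V. f v = 1 \<and> (\<exists>u\<in>nbhd V E v. f u = 2)} \<le> qtR_number V E
         \<and> qtR_number V E \<le> 3 * domination_number V E"
proof
  have fin: "finite V" using assms(1) by (simp add: simple_graph_def)
  have q: "qtrdf V E f" and w: "weight V f = qtR_number V E"
    using assms(3) by (auto simp: qtR_function_def)
  define V1 where "V1 = {v\<in>V. f v = 1}"
  define V2 where "V2 = {v\<in>V. f v = 2}"
  define S where "S = {v\<in>V. f v = 1 \<and> (\<exists>u\<in>nbhd V E v. f u = 2)}"
  have SV1: "S \<subseteq> V1" unfolding S_def V1_def by auto
  have fV1: "finite V1" "finite V2" "finite S" using fin unfolding V1_def V2_def S_def by auto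
  have "weight V f = (\<Sum>v\<in>V. (if f v = 1 then 1 else 0) + (if f v = 2 then 2 else 0))"
    unfolding weight_def
  proof (rule sum.cong)
    fix v assume "v \<in> V"
    then have "f v \<le> 2" using q by (auto simp: qtrdf_def)
    then show "f v = (if f v = 1 then 1 else 0) + (if f v = 2 then 2 else 0)" by auto
  qed simp
  also have "\<dots> = card V1 + 2 * card V2"
    unfolding sum.distrib V1_def V2_def
    using sum.inter_filter[OF fin, of "\<lambda>_. 1::nat" "\<lambda>v. f v = 1", symmetric]
          sum.inter_filter[OF fin, of "\<lambda>_. 2::nat" "\<lambda>v. f v = 2", symmetric]
    by simp
  finally have wf: "weight V f = card V1 + 2 * card V2" .
  define D where "D = V2 \<union> (V1 - S)"
  have "dominating_set V E D"
    unfolding dominating_set_def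
  proof
    show "D \<subseteq> V" unfolding D_def V1_def V2_def by auto
    show "\<forall>v\<in>V - D. nbhd V E v \<inter> D \<noteq> {}"
    proof
      fix v assume v: "v \<in> V - D"
      have "\<exists>u\<in>nbhd V E v. f u = 2"
      proof (cases "f v = 0")
        case True then show ?thesis using q v by (auto simp: qtrdf_def)
      next
        case False
        then have "f v = 1 \<or> f v = 2" using q v by (auto simp: qtrdf_def)
        then show ?thesis using v unfolding D_def V1_def V2_def S_def by auto
      qed
      then show "nbhd V E v \<inter> D \<noteq> {}" unfolding D_def V2_def nbhd_def by auto
    qed
  qed
  then have "domination_number V E \<le> card D" using dom_le fin by blast
  also have "card D = card V2 + card (V1 - S)"
    unfolding D_def using fV1 by (intro card_Un_disjoint) (auto simp: V1_def V2_def)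
  also have "card (V1 - S) = card V1 - card S" using SV1 fV1 by (simp add: card_Diff_subset)
  finally have "domination_number V E \<le> card V2 + (card V1 - card S)" .
  moreover have "card S \<le> card V1" using SV1 fV1 by (simp add: card_mono)
  ultimately show "domination_number V E + card {v\<in>V. f v = 2}
           + card {v\<in>V. f v = 1 \<and> (\<exists>u\<in>nbhd V E v. f u = 2)} \<le> qtR_number V E"
    using w wf unfolding V2_def[symmetric] S_def[symmetric] by linarith
next
  have fin: "finite V" using assms(1) by (simp add: simple_graph_def)
  obtain D where D: "dominating_set V E D" "card D = domination_number V E"
    using dom_ex[OF fin] by blast
  have DV: "D \<subseteq> V" using D by (simp add: dominating_set_def)
  define nb where "nb v = (SOME u. u \<in> nbhd V E v)" for v
  have nb: "nb v \<in> nbhd V E v" if "v \<in> V" for v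
    using assms(2) that unfolding nb_def no_isolated_def by (metis some_in_eq)
  have nbV: "nb ` D \<subseteq> V" using nb DV by (auto simp: nbhd_def)
  define g where "g v = (if v \<in> D then 2 else if v \<in> nb ` D then 1 else (0::nat))" for v
  have "qtrdf V E g"
    unfolding qtrdf_def
  proof (intro conjI ballI allI impI)
    fix v assume "v \<notin> V" then show "g v = 0" using DV nbV unfolding g_def by auto
  next
    fix v assume "v \<in> V" then show "g v \<le> 2" unfolding g_def by auto
  next
    fix v assume v: "v \<in> V" "g v = 0"
    then have "v \<in> V - D" unfolding g_def by (auto split: if_splits)
    then obtain u where "u \<in> nbhd V E v" "u \<in> D" using D(1) unfolding dominating_set_def by blast
    then show "\<exists>u\<in>nbhd V E v. g u = 2" unfolding g_def by auto
  next
    fix v assume v: "v \<in> V" "g v \<noteq> 0 \<and> (\<forall>u\<in>nbhd V E v. g u = 0)"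
    show "g v = 1"
    proof (cases "v \<in> D")
      case True
      then have "g (nb v) \<noteq> 0" unfolding g_def by auto
      then show ?thesis using v nb[OF v(1)] by auto
    next
      case False then show ?thesis using v unfolding g_def by (auto split: if_splits)
    qed
  qed
  then have "qtR_number V E \<le> weight V g" using qtR_le fin by blast
  also have "weight V g \<le> (\<Sum>v\<in>V. (if v \<in> D then 2 else 0) + (if v \<in> nb ` D then 1 else 0))"
    unfolding weight_def g_def by (intro sum_mono) auto
  also have "\<dots> = 2 * card D + card (nb ` D)"
    using sum.inter_filter[OF fin, of "\<lambda>_. 2::nat" "\<lambda>v. v \<in> D", symmetric]
          sum.inter_filter[OF fin, of "\<lambda>_. 1::nat" "\<lambda>v. v \<in> nb ` D", symmetric]
          DV nbV
  proof -
    have a: "{x \<in> V. x \<in> D} = D" "{x \<in> V. x \<in> nb ` D} = nb ` D" using DV nbV by auto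
    show ?thesis unfolding sum.distrib
      using sum.inter_filter[OF fin, of "\<lambda>_. 2::nat" "\<lambda>v. v \<in> D", symmetric]
          sum.inter_filter[OF fin, of "\<lambda>_. 1::nat" "\<lambda>v. v \<in> nb ` D", symmetric]
      unfolding a by simp
  qed
  also have "card (nb ` D) \<le> card D" using DV fin by (intro card_image_le) (auto intro: finite_subset)
  finally show "qtR_number V E \<le> 3 * domination_number V E" using D(2) by linarith
qed

end
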